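(* Let $r\in\mathbb{N}$ (so $n=r$), $\alpha>0$, $x_j=(j-1)/n$ and $c_j=x_j^\alpha$ for $j=1,\dots,n+1$. For $\lambda\ge 0$ let $m_j(\lambda)=e^{-\lambda c_j}/z(\lambda)$ with $z(\lambda)=\sum_{k=1}^{n+1}e^{-\lambda c_k}$, and $p_X^{\lambda}=\sum_{j=1}^{n+1}m_j(\lambda)\delta_{x_j}$. Then: (i) for every $\lambda\ge 0$, $i(x_j;p_X^{\lambda})=I(p_X^{\lambda})+\lambda\,\bigl(c_j-\mathbb{E}_{p_X^\lambda}[c(X)]\bigr)$ for all $j=1,\dots,n+1$; (ii) the function $\lambda\mapsto \mathbb{E}_{p_X^{\lambda}}[c(X)]=\sum_j m_j(\lambda)c_j$ satisfies $\frac{d}{d\lambda}\mathbb{E}_{p_X^{\lambda}}[c(X)]=-\mathrm{Var}_{p_X^{\lambda}}(c(X))<0$ on $[0,\infty)$, equals $\bar c^\ast$ at $\lambda=0$ and tends to $0$ as $\lambda\to\infty$. Consequently, for every $\bar c\in(0,\bar c^{\ast}]$ there is a unique $\lambda^{\ast}\ge 0$ with $\mathbb{E}_{p_X^{\lambda^\ast}}[c(X)]=\bar c$, and $p_X^{\lambda^\ast}$ satisfies $i(x;p_X^{\lambda^\ast})=I(p_X^{\lambda^\ast})+\lambda^\ast(c(x)-\bar c)$ for all $x$ in its support.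
   Context: Fix $b>0$ and set $r:=1/(2b)$, $n:=\lfloor r\rfloor$. Consider the additive uniform noise channel $Y=X+N$ with $N\sim\mathrm{Uniform}(-b,b)$ independent of $X$, so the transition density is $p_N(y\mid x)=r\,\mathbf{1}_{x-b<y<x+b}$. Admissible inputs are probability distributions $p_X$ on $[0,1]$. For such $p_X$ the output density is $p_Y(y;p_X)=\int p_N(y\mid x)\,dp_X(x)$, the marginal information density is $i(x;p_X)=\int p_N(y\mid x)\log\frac{p_N(y\mid x)}{p_Y(y;p_X)}\,dy\in[0,\infty]$, and $I(p_X)=\int i(x;p_X)\,dp_X(x)$ is the mutual information. The cost function is $c(x)=x^{\alpha}$. For $r\in\mathbb{N}$ the critical cost is $\bar c^\ast:=\frac{1}{n+1}\sum_{j=1}^{n+1}x_j^\alpha$ with $x_j=(j-1)/n$ (the expected cost under the capacity-achieving input without cost constraint, which is uniform on $\{x_1,\dots,x_{n+1}\}$). *)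

theory Defs
  imports "HOL-Probability.Probability"
begin

text \<open>Additive uniform noise channel Y = X + N, N ~ Uniform(-b,b), r = 1/(2b).\<close>

definition pN :: "real \<Rightarrow> real \<Rightarrow> real \<Rightarrow> real" where
  "pN b y x = (1 / (2 * b)) * (if x - b < y \<and> y < x + b then 1 else 0)"

definition pY :: "real \<Rightarrow> real measure \<Rightarrow> real \<Rightarrow> real" where
  "pY b P y = (\<integral>x. pN b y x \<partial>P)"

text \<open>Marginal information density i(x;P) with values in [0,\<infinity>]; the integrand
  pN log(pN/pY) is taken as 0 where pN = 0 and as \<infinity> where pN > 0 = pY.\<close>
definition info_dens :: "real \<Rightarrow> real measure \<Rightarrow> real \<Rightarrow> ennreal" where
  "info_dens b P x =
     (\<integral>\<^sup>+ y. (if pN b y x = 0 then 0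
               else if pY b P y = 0 then \<infinity>
               else ennreal (pN b y x * ln (pN b y x / pY b P y))) \<partial>lborel)"

definition mutual_info :: "real \<Rightarrow> real measure \<Rightarrow> ennreal" where
  "mutual_info b P = (\<integral>\<^sup>+ x. info_dens b P x \<partial>P)"

definition cost :: "real \<Rightarrow> real \<Rightarrow> real" where
  "cost \<alpha> x = x powr \<alpha>"

definition xpt :: "nat \<Rightarrow> nat \<Rightarrow> real" where
  "xpt n j = real (j - 1) / real n"

definition zfun :: "nat \<Rightarrow> real \<Rightarrow> real \<Rightarrow> real" where
  "zfun n \<alpha> l = (\<Sum>k\<in>{1..n+1}. exp (- l * cost \<alpha> (xpt n k)))"

definition mw :: "nat \<Rightarrow> real \<Rightarrow> real \<Rightarrow> nat \<Rightarrow> real" where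
  "mw n \<alpha> l j = exp (- l * cost \<alpha> (xpt n j)) / zfun n \<alpha> l"

definition pX_lam :: "nat \<Rightarrow> real \<Rightarrow> real \<Rightarrow> real pmf" where
  "pX_lam n \<alpha> l = embed_pmf (\<lambda>x. \<Sum>j\<in>{1..n+1}. if x = xpt n j then mw n \<alpha> l j else 0)"

definition cbar_star :: "nat \<Rightarrow> real \<Rightarrow> real" where
  "cbar_star n \<alpha> = (1 / real (n + 1)) * (\<Sum>j\<in>{1..n+1}. cost \<alpha> (xpt n j))"

end

theory Submission
  imports Defs
begin

lemma xpt_inj: "n \<ge> 1 \<Longrightarrow> inj_on (xpt n) {1..n+1}"
  unfolding inj_on_def xpt_def by auto

lemma xpt_eq: "n \<ge> 1 \<Longrightarrow> j \<in> {1..n+1} \<Longrightarrow> k \<in> {1..n+1} \<Longrightarrow> xpt n j = xpt n k \<longleftrightarrow> j = k"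
  using xpt_inj[of n] unfolding inj_on_def by blast

lemma zfun_ge1: "zfun n \<alpha> l \<ge> 1"
proof -
  have "zfun n \<alpha> l = exp (- l * cost \<alpha> (xpt n 1)) + (\<Sum>k\<in>{1..n+1}-{1}. exp (- l * cost \<alpha> (xpt n k)))"
    unfolding zfun_def by (subst sum.remove[of _ 1]) auto
  moreover have "cost \<alpha> (xpt n 1) = 0" by (simp add: cost_def xpt_def)
  moreover have "(\<Sum>k\<in>{1..n+1}-{1}. exp (- l * cost \<alpha> (xpt n k))) \<ge> 0" by (intro sum_nonneg) auto
  ultimately show ?thesis by simp
qed

lemma zfun_pos: "zfun n \<alpha> l > 0" using zfun_ge1[of n \<alpha> l] by linarith

lemma mw_pos: "mw n \<alpha> l j > 0" unfolding mw_def using zfun_pos by simp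

lemma mw_sum: "(\<Sum>j\<in>{1..n+1}. mw n \<alpha> l j) = 1"
  unfolding mw_def using zfun_pos[of n \<alpha> l] by (simp add: sum_divide_distrib[symmetric] zfun_def)

lemma mw_le1: "mw n \<alpha> l j \<le> 1" if "j \<in> {1..n+1}"
proof -
  have "mw n \<alpha> l j \<le> (\<Sum>j\<in>{1..n+1}. mw n \<alpha> l j)"
    using that by (intro member_le_sum) (auto intro: less_imp_le mw_pos)
  then show ?thesis using mw_sum by simp
qed

lemma mlnm_nn: assumes "j \<in> {1..n+1}"
  shows "- ln (mw n \<alpha> l j) \<ge> 0" "mw n \<alpha> l j * (- ln (mw n \<alpha> l j)) \<ge> 0"
proof -
  have "ln (mw n \<alpha> l j) \<le> 0" using mw_le1[OF assms] mw_pos[of n \<alpha> l j] by (simp add: ln_le_zero_iff)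
  thus a: "- ln (mw n \<alpha> l j) \<ge> 0" by simp
  show "mw n \<alpha> l j * (- ln (mw n \<alpha> l j)) \<ge> 0"
    by (rule mult_nonneg_nonneg) (use a mw_pos[of n \<alpha> l j] in auto)
qed

definition fpx where "fpx n \<alpha> l = (\<lambda>x. \<Sum>j\<in>{1..n+1}. if x = xpt n j then mw n \<alpha> l j else (0::real))"

lemma fpx_at: assumes "n \<ge> 1" "j \<in> {1..n+1}" shows "fpx n \<alpha> l (xpt n j) = mw n \<alpha> l j"
proof -
  have "fpx n \<alpha> l (xpt n j) = (\<Sum>k\<in>{1..n+1}. if j = k then mw n \<alpha> l k else 0)"
    unfolding fpx_def by (rule sum.cong) (use xpt_eq[OF assms] in auto)
  also have "\<dots> = mw n \<alpha> l j" using assms(2) by (simp add: sum.delta')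
  finally show ?thesis .
qed

lemma fpx_off: "x \<notin> xpt n ` {1..n+1} \<Longrightarrow> fpx n \<alpha> l x = 0"
  unfolding fpx_def by (intro sum.neutral) auto

lemma fpx_nonneg: "fpx n \<alpha> l x \<ge> 0"
  unfolding fpx_def by (intro sum_nonneg) (auto intro: less_imp_le mw_pos)

lemma fpx_prob: assumes "n \<ge> 1" shows "(\<integral>\<^sup>+x. fpx n \<alpha> l x \<partial>count_space UNIV) = 1"
proof -
  have "(\<integral>\<^sup>+x. fpx n \<alpha> l x \<partial>count_space UNIV) = (\<Sum>x\<in>xpt n ` {1..n+1}. ennreal (fpx n \<alpha> l x))"
    by (rule nn_integral_count_space') (auto simp: fpx_off)
  also have "\<dots> = (\<Sum>j\<in>{1..n+1}. ennreal (fpx n \<alpha> l (xpt n j)))"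
    by (rule sum.reindex[unfolded comp_def]) (rule xpt_inj[OF assms])
  also have "\<dots> = (\<Sum>j\<in>{1..n+1}. ennreal (mw n \<alpha> l j))"
    using fpx_at[OF assms] by simp
  also have "\<dots> = ennreal (\<Sum>j\<in>{1..n+1}. mw n \<alpha> l j)"
    by (rule sum_ennreal) (auto intro: less_imp_le mw_pos)
  finally show ?thesis using mw_sum by simp
qed

lemma pmf_pX: "n \<ge> 1 \<Longrightarrow> pmf (pX_lam n \<alpha> l) x = fpx n \<alpha> l x"
  unfolding pX_lam_def fpx_def[symmetric]
  by (rule pmf_embed_pmf) (auto intro: fpx_nonneg fpx_prob)

lemma set_pX: assumes "n \<ge> 1" shows "set_pmf (pX_lam n \<alpha> l) = xpt n ` {1..n+1}"
proof -
  have "set_pmf (pX_lam n \<alpha> l) = {x. fpx n \<alpha> l x \<noteq> 0}"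
    by (auto simp: set_pmf_eq pmf_pX[OF assms])
  also have "\<dots> = xpt n ` {1..n+1}"
  proof (intro equalityI subsetI)
    fix x assume "x \<in> {x. fpx n \<alpha> l x \<noteq> 0}"
    thus "x \<in> xpt n ` {1..n+1}" using fpx_off by blast
  next
    fix x assume "x \<in> xpt n ` {1..n+1}"
    then obtain j where j: "j \<in> {1..n+1}" and xj: "x = xpt n j" by blast
    have "fpx n \<alpha> l x = mw n \<alpha> l j" using fpx_at[OF assms j] xj by simp
    thus "x \<in> {x. fpx n \<alpha> l x \<noteq> 0}" using mw_pos[of n \<alpha> l j] by simp
  qed
  finally show ?thesis .
qed

lemma expect_pX: assumes "n \<ge> 1"
  shows "measure_pmf.expectation (pX_lam n \<alpha> l) g = (\<Sum>j\<in>{1..n+1}. mw n \<alpha> l j * g (xpt n j))"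
proof -
  have "measure_pmf.expectation (pX_lam n \<alpha> l) g = (\<Sum>x\<in>xpt n ` {1..n+1}. g x * pmf (pX_lam n \<alpha> l) x)"
    by (rule integral_measure_pmf_real) (auto simp: set_pX[OF assms])
  also have "\<dots> = (\<Sum>j\<in>{1..n+1}. g (xpt n j) * pmf (pX_lam n \<alpha> l) (xpt n j))"
    by (rule sum.reindex[unfolded comp_def]) (rule xpt_inj[OF assms])
  finally show ?thesis by (simp add: pmf_pX[OF assms] fpx_at[OF assms] mult.commute)
qed

lemma nn_pX: assumes "n \<ge> 1"
  shows "(\<integral>\<^sup>+x. h x \<partial>measure_pmf (pX_lam n \<alpha> l)) = (\<Sum>j\<in>{1..n+1}. h (xpt n j) * ennreal (mw n \<alpha> l j))"
proof -
  have "(\<integral>\<^sup>+x. h x \<partial>measure_pmf (pX_lam n \<alpha> l)) = (\<Sum>x\<in>xpt n ` {1..n+1}. h x * pmf (pX_lam n \<alpha> l) x)"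
    by (rule nn_integral_measure_pmf_support) (auto simp: set_pX[OF assms])
  also have "\<dots> = (\<Sum>j\<in>{1..n+1}. h (xpt n j) * pmf (pX_lam n \<alpha> l) (xpt n j))"
    by (rule sum.reindex[unfolded comp_def]) (rule xpt_inj[OF assms])
  finally show ?thesis by (simp add: pmf_pX[OF assms] fpx_at[OF assms])
qed

lemma sep: assumes hb: "b > 0" and hr: "1 / (2*b) = real n" and j: "j \<in> {1..n+1}" and k: "k \<in> {1..n+1}"
  and kj: "k \<noteq> j" and y: "xpt n j - b < y" "y < xpt n j + b"
  shows "\<not> (xpt n k - b < y \<and> y < xpt n k + b)"
proof
  assume h: "xpt n k - b < y \<and> y < xpt n k + b"
  have n: "real n = 1/(2*b)" using hr by simp
  have npos: "real n > 0" using n hb by simp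
  have bb: "2*b*real n = 1" using n hb by simp
  have "\<bar>xpt n k - xpt n j\<bar> < 2*b" using h y by auto
  hence "\<bar>xpt n k - xpt n j\<bar> * real n < 1" using bb npos
    by (metis mult_strict_right_mono)
  moreover have "\<bar>xpt n k - xpt n j\<bar> * real n = \<bar>real k - real j\<bar>"
    using j k npos by (auto simp: xpt_def of_nat_diff abs_mult divide_simps)
  moreover have "\<bar>real k - real j\<bar> \<ge> 1" using kj by (cases "k < j") auto
  ultimately show False by linarith
qed

lemma pY_val: assumes hb: "b > 0" and hr: "1 / (2*b) = real n" and j: "j \<in> {1..n+1}"
  and y: "xpt n j - b < y" "y < xpt n j + b"
  shows "pY b (measure_pmf (pX_lam n \<alpha> l)) y = mw n \<alpha> l j * real n"
proof -
  have "0 < 1/(2*b)" using hb by simp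
  hence "real n > 0" using hr by simp
  hence n1: "n \<ge> 1" by simp
  have "pY b (measure_pmf (pX_lam n \<alpha> l)) y = (\<Sum>k\<in>{1..n+1}. mw n \<alpha> l k * pN b y (xpt n k))"
    unfolding pY_def by (rule expect_pX[OF n1])
  also have "\<dots> = (\<Sum>k\<in>{1..n+1}. if k = j then mw n \<alpha> l k * real n else 0)"
  proof (rule sum.cong)
    fix k assume k: "k \<in> {1..n+1}"
    show "mw n \<alpha> l k * pN b y (xpt n k) = (if k = j then mw n \<alpha> l k * real n else 0)"
      using sep[OF hb hr j k _ y] y hr unfolding pN_def by auto
  qed simp
  also have "\<dots> = mw n \<alpha> l j * real n" using j by (simp add: sum.delta)
  finally show ?thesis .
qed

lemma n_ge1: assumes hb: "b > 0" and hr: "1 / (2*b) = real n" shows "n \<ge> 1"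
proof -
  have "0 < 1/(2*b)" using hb by simp
  hence "real n > 0" using hr by simp
  thus ?thesis by simp
qed

lemma info_val: assumes hb: "b > 0" and hr: "1 / (2*b) = real n" and j: "j \<in> {1..n+1}"
  shows "info_dens b (measure_pmf (pX_lam n \<alpha> l)) (xpt n j) = ennreal (- ln (mw n \<alpha> l j))"
proof -
  let ?P = "measure_pmf (pX_lam n \<alpha> l)"
  let ?m = "mw n \<alpha> l j"
  have m0: "?m > 0" by (rule mw_pos)
  have npos: "real n > 0" using n_ge1[OF hb hr] by simp
  have bb: "2*b*real n = 1" using hr hb by (simp add: hr[symmetric])
  have nn0: "0 \<le> real n * (- ln ?m)" by (intro mult_nonneg_nonneg) (use mlnm_nn(1)[OF j] in auto)
  have eq: "(if pN b y (xpt n j) = 0 then 0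
               else if pY b ?P y = 0 then \<infinity>
               else ennreal (pN b y (xpt n j) * ln (pN b y (xpt n j) / pY b ?P y)))
        = ennreal (real n * (- ln ?m)) * indicator {xpt n j - b <..< xpt n j + b} y" for y
  proof (cases "xpt n j - b < y \<and> y < xpt n j + b")
    case True
    have py: "pY b ?P y = ?m * real n" using pY_val[OF hb hr j] True by auto
    have pn: "pN b y (xpt n j) = real n" using True hr unfolding pN_def by simp
    have "ln (real n / (?m * real n)) = - ln ?m" using npos m0 by (simp add: ln_div)
    thus ?thesis using True py pn npos m0 by (simp add: indicator_def)
  next
    case False
    hence "pN b y (xpt n j) = 0" unfolding pN_def by auto
    thus ?thesis using False by (simp add: indicator_def)
  qed
  have "info_dens b ?P (xpt n j) = (\<integral>\<^sup>+ y. ennreal (real n * (- ln ?m)) * indicator {xpt n j - b <..< xpt n j + b} y \<partial>lborel)"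
    unfolding info_dens_def by (simp only: eq)
  also have "\<dots> = ennreal (real n * (- ln ?m)) * ennreal (2*b)"
    using hb by (simp add: nn_integral_cmult_indicator)
  also have "\<dots> = ennreal (real n * (- ln ?m) * (2*b))"
    by (rule ennreal_mult[symmetric]) (use hb nn0 in auto)
  also have "real n * (- ln ?m) * (2*b) = - ln ?m" using bb by (simp add: algebra_simps)
  finally show ?thesis .
qed

lemma mi_val: assumes hb: "b > 0" and hr: "1 / (2*b) = real n"
  shows "mutual_info b (measure_pmf (pX_lam n \<alpha> l)) = ennreal (\<Sum>j\<in>{1..n+1}. mw n \<alpha> l j * (- ln (mw n \<alpha> l j)))"
proof -
  have "mutual_info b (measure_pmf (pX_lam n \<alpha> l)) = (\<Sum>j\<in>{1..n+1}. info_dens b (measure_pmf (pX_lam n \<alpha> l)) (xpt n j) * ennreal (mw n \<alpha> l j))"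
    unfolding mutual_info_def by (rule nn_pX[OF n_ge1[OF hb hr]])
  also have "\<dots> = (\<Sum>j\<in>{1..n+1}. ennreal (mw n \<alpha> l j * (- ln (mw n \<alpha> l j))))"
  proof (rule sum.cong)
    fix j assume j: "j \<in> {1..n+1}"
    have "- ln (mw n \<alpha> l j) \<ge> 0" by (rule mlnm_nn[OF j])
    hence "ennreal (- ln (mw n \<alpha> l j)) * ennreal (mw n \<alpha> l j) = ennreal (mw n \<alpha> l j * (- ln (mw n \<alpha> l j)))"
      using mw_pos[of n \<alpha> l j] by (simp add: ennreal_mult[symmetric] mult.commute)
    thus "info_dens b (measure_pmf (pX_lam n \<alpha> l)) (xpt n j) * ennreal (mw n \<alpha> l j) = ennreal (mw n \<alpha> l j * (- ln (mw n \<alpha> l j)))"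
      using info_val[OF hb hr j] by simp
  qed simp
  also have "\<dots> = ennreal (\<Sum>j\<in>{1..n+1}. mw n \<alpha> l j * (- ln (mw n \<alpha> l j)))"
  proof (rule sum_ennreal)
    fix j assume j: "j \<in> {1..n+1}"
    show "0 \<le> mw n \<alpha> l j * (- ln (mw n \<alpha> l j))" by (rule mlnm_nn[OF j])
  qed
  finally show ?thesis .
qed

lemma ln_mw: "ln (mw n \<alpha> l k) = - l * cost \<alpha> (xpt n k) - ln (zfun n \<alpha> l)"
  unfolding mw_def using zfun_pos[of n \<alpha> l] by (simp add: ln_div)

lemma info_identity: assumes j: "j \<in> {1..n+1}"
  shows "- ln (mw n \<alpha> l j) = (\<Sum>k\<in>{1..n+1}. mw n \<alpha> l k * (- ln (mw n \<alpha> l k)))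
          + l * (cost \<alpha> (xpt n j) - (\<Sum>k\<in>{1..n+1}. mw n \<alpha> l k * cost \<alpha> (xpt n k)))"
proof -
  have "(\<Sum>k\<in>{1..n+1}. mw n \<alpha> l k * (- ln (mw n \<alpha> l k)))
      = (\<Sum>k\<in>{1..n+1}. l * (mw n \<alpha> l k * cost \<alpha> (xpt n k)) + mw n \<alpha> l k * ln (zfun n \<alpha> l))"
    by (rule sum.cong) (auto simp: ln_mw algebra_simps)
  also have "\<dots> = l * (\<Sum>k\<in>{1..n+1}. mw n \<alpha> l k * cost \<alpha> (xpt n k)) + ln (zfun n \<alpha> l)"
    by (simp only: sum.distrib sum_distrib_left[symmetric] sum_distrib_right[symmetric] mw_sum mult_1)
  finally show ?thesis by (simp add: ln_mw algebra_simps)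
qed

lemma E_formula: "(\<Sum>j\<in>{1..n+1}. mw n \<alpha> l j * cost \<alpha> (xpt n j))
   = (\<Sum>j\<in>{1..n+1}. exp (- l * cost \<alpha> (xpt n j)) * cost \<alpha> (xpt n j)) / zfun n \<alpha> l"
  unfolding mw_def sum_divide_distrib by (rule sum.cong) auto

lemma var_alg: fixes e c :: "nat \<Rightarrow> real"
  assumes s0: "(\<Sum>j\<in>I. e j) = z" and zp: "z \<noteq> 0"
  shows "(\<Sum>j\<in>I. (e j / z) * (c j - (\<Sum>k\<in>I. e k * c k)/z)^2)
     = (\<Sum>j\<in>I. e j*c j*c j)/z - ((\<Sum>j\<in>I. e j*c j)/z)^2"
proof -
  define A where "A = (\<Sum>k\<in>I. e k * c k)"
  define B where "B = (\<Sum>j\<in>I. e j*c j*c j)"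
  have "(\<Sum>j\<in>I. (e j / z) * (c j - A/z)^2)
     = (\<Sum>j\<in>I. (e j*c j*c j) / z - 2 * (A/z) * (e j * c j / z) + (A/z)^2 * (e j / z))"
    by (rule sum.cong) (use zp in \<open>auto simp: power2_eq_square field_simps\<close>)
  also have "\<dots> = (\<Sum>j\<in>I. e j*c j*c j) / z - 2 * (A/z) * ((\<Sum>j\<in>I. e j * c j) / z) + (A/z)^2 * ((\<Sum>j\<in>I. e j) / z)"
    by (simp only: sum.distrib sum_subtractf flip: sum_divide_distrib sum_distrib_left)
  also have "\<dots> = B / z - 2 * (A/z) * (A/z) + (A/z)^2 * (z / z)"
    unfolding A_def B_def s0 ..
  also have "\<dots> = B / z - (A/z)^2" using zp by (simp add: power2_eq_square)
  finally show ?thesis unfolding A_def B_def .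
qed

lemma E_deriv:
  fixes n :: nat and \<alpha> l :: real
  defines "c \<equiv> \<lambda>j. cost \<alpha> (xpt n j)"
  defines "F \<equiv> \<lambda>l. (\<Sum>j\<in>{1..n+1}. exp (- l * c j) * c j) / zfun n \<alpha> l"
  shows "(F has_real_derivative
     - (\<Sum>j\<in>{1..n+1}. mw n \<alpha> l j * (c j - (\<Sum>k\<in>{1..n+1}. mw n \<alpha> l k * c k))^2)) (at l)"
proof -
  define z where "z = zfun n \<alpha> l"
  define A where "A = (\<Sum>j\<in>{1..n+1}. exp (- l * c j) * c j)"
  define B where "B = (\<Sum>j\<in>{1..n+1}. exp (- l * c j) * c j * c j)"
  have zp: "z > 0" unfolding z_def by (rule zfun_pos)
  have zf: "zfun n \<alpha> = (\<lambda>l. \<Sum>j\<in>{1..n+1}. exp (- l * c j))"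
    unfolding zfun_def c_def by auto
  have dA: "((\<lambda>l. \<Sum>j\<in>{1..n+1}. exp (- l * c j) * c j) has_real_derivative - B) (at l)"
    unfolding B_def sum_negf[symmetric]
    by (rule DERIV_sum) (auto intro!: derivative_eq_intros)
  have dz: "(zfun n \<alpha> has_real_derivative - A) (at l)"
    unfolding zf A_def sum_negf[symmetric]
    by (rule DERIV_sum) (auto intro!: derivative_eq_intros)
  have dF: "(F has_real_derivative ((- B) * z - A * (- A)) / (z * z)) (at l)"
  proof -
    have "(F has_real_derivative ((- B) * zfun n \<alpha> l - (\<Sum>j\<in>{1..n+1}. exp (- l * c j) * c j) * (- A)) / (zfun n \<alpha> l * zfun n \<alpha> l)) (at l)"
      unfolding F_def by (rule DERIV_divide[OF dA dz]) (use zfun_pos[of n \<alpha> l] in simp)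
    thus ?thesis unfolding A_def[symmetric] z_def[symmetric] .
  qed
  have mwz: "mw n \<alpha> l j = exp (- l * c j) / z" for j unfolding mw_def z_def c_def by simp
  have s1: "(\<Sum>k\<in>{1..n+1}. mw n \<alpha> l k * c k) = A / z"
    unfolding A_def mwz sum_divide_distrib by (rule sum.cong) auto
  have s0: "(\<Sum>k\<in>{1..n+1}. exp (- l * c k)) = z" unfolding z_def zf ..
  have "(\<Sum>j\<in>{1..n+1}. mw n \<alpha> l j * (c j - A/z)^2)
     = (\<Sum>j\<in>{1..n+1}. (exp (- l * c j) / z) * (c j - (\<Sum>k\<in>{1..n+1}. exp (- l * c k) * c k)/z)^2)"
    unfolding mwz A_def ..
  also have "\<dots> = B / z - (A/z)^2"
    unfolding A_def B_def by (rule var_alg[OF s0]) (use zp in simp)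
  also have "\<dots> = - (((- B) * z - A * (- A)) / (z * z))"
    using zp by (simp add: field_simps power2_eq_square)
  finally have "((- B) * z - A * (- A)) / (z * z) = - (\<Sum>j\<in>{1..n+1}. mw n \<alpha> l j * (c j - (\<Sum>k\<in>{1..n+1}. mw n \<alpha> l k * c k))^2)"
    unfolding s1 by simp
  with dF show ?thesis by simp
qed

lemma expdecay: assumes "(c::real) > 0" shows "((\<lambda>l. exp (- l * c)) \<longlongrightarrow> 0) at_top"
proof -
  have "filterlim (\<lambda>l. l * c) at_top at_top"
    using filterlim_tendsto_pos_mult_at_top[OF tendsto_const assms filterlim_ident] by (simp add: mult.commute)
  hence "filterlim (\<lambda>l. - (l * c)) at_bot at_top"
    by (simp add: filterlim_uminus_at_top)
  from filterlim_compose[OF exp_at_bot this] show ?thesis by simp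
qed

lemma var_pos: assumes n1: "n \<ge> 1" and a: "\<alpha> > 0"
  shows "(\<Sum>j\<in>{1..n+1}. mw n \<alpha> l j * (cost \<alpha> (xpt n j) - e)^2) > 0"
proof (rule ccontr)
  assume "\<not> ?thesis"
  moreover have nn: "\<forall>j\<in>{1..n+1}. mw n \<alpha> l j * (cost \<alpha> (xpt n j) - e)^2 \<ge> 0"
    by (auto intro!: mult_nonneg_nonneg less_imp_le[OF mw_pos])
  moreover have "(\<Sum>j\<in>{1..n+1}. mw n \<alpha> l j * (cost \<alpha> (xpt n j) - e)^2) \<ge> 0"
    by (rule sum_nonneg) (use nn in auto)
  ultimately have "(\<Sum>j\<in>{1..n+1}. mw n \<alpha> l j * (cost \<alpha> (xpt n j) - e)^2) = 0"
    by linarith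
  hence "\<forall>j\<in>{1..n+1}. mw n \<alpha> l j * (cost \<alpha> (xpt n j) - e)^2 = 0"
    using nn by (subst sum_nonneg_eq_0_iff[symmetric]) auto
  hence z: "\<forall>j\<in>{1..n+1}. cost \<alpha> (xpt n j) = e"
  proof (intro ballI)
    fix j assume h: "\<forall>j\<in>{1..n+1}. mw n \<alpha> l j * (cost \<alpha> (xpt n j) - e)^2 = 0" and j: "j \<in> {1..n+1}"
    have "mw n \<alpha> l j * (cost \<alpha> (xpt n j) - e)^2 = 0" using h j by blast
    moreover have "mw n \<alpha> l j \<noteq> 0" using mw_pos[of n \<alpha> l j] by simp
    ultimately show "cost \<alpha> (xpt n j) = e" by simp
  qed
  have "cost \<alpha> (xpt n 1) = 0" by (simp add: cost_def xpt_def)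
  moreover have "cost \<alpha> (xpt n 2) > 0" using n1 by (simp add: cost_def xpt_def)
  moreover have "(1::nat) \<in> {1..n+1}" by simp
  moreover have "(2::nat) \<in> {1..n+1}" using n1 by simp
  ultimately show False using z by (metis less_irrefl)
qed

lemma E_lim: "((\<lambda>l. \<Sum>j\<in>{1..n+1}. mw n \<alpha> l j * cost \<alpha> (xpt n j)) \<longlongrightarrow> 0) at_top"
proof -
  have "((\<lambda>l. mw n \<alpha> l j * cost \<alpha> (xpt n j)) \<longlongrightarrow> 0) at_top" for j
  proof (cases "cost \<alpha> (xpt n j) = 0")
    case True thus ?thesis by simp
  next
    case False
    let ?c = "cost \<alpha> (xpt n j)"
    have cpos: "?c > 0" using False unfolding cost_def xpt_def by simp
    have up: "((\<lambda>l. exp (- l * ?c) * ?c) \<longlongrightarrow> 0) at_top"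
      using tendsto_mult[OF expdecay[OF cpos] tendsto_const[of ?c]] by simp
    show ?thesis
    proof (rule tendsto_sandwich[OF _ _ tendsto_const up])
      show "\<forall>\<^sub>F l in at_top. 0 \<le> mw n \<alpha> l j * ?c"
        using mw_pos cpos by (auto intro!: always_eventually less_imp_le)
      have "mw n \<alpha> l j * ?c \<le> exp (- l * ?c) * ?c" for l
      proof -
        have "mw n \<alpha> l j \<le> exp (- l * ?c)"
          unfolding mw_def using zfun_ge1[of n \<alpha> l]
          by (simp add: divide_le_eq)
        thus ?thesis using cpos by simp
      qed
      thus "\<forall>\<^sub>F l in at_top. mw n \<alpha> l j * ?c \<le> exp (- l * ?c) * ?c" by (auto intro!: always_eventually)
    qed
  qed
  hence "((\<lambda>l. \<Sum>j\<in>{1..n+1}. mw n \<alpha> l j * cost \<alpha> (xpt n j)) \<longlongrightarrow> (\<Sum>j\<in>{1..n+1}. 0)) at_top"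
    by (intro tendsto_sum) auto
  thus ?thesis by simp
qed


theorem mainTheorem4:
  fixes b \<alpha> :: real and n :: nat
  assumes hb: "b > 0"
    and hr: "1 / (2 * b) = real n"
    and h\<alpha>: "\<alpha> > 0"
  defines "E \<equiv> (\<lambda>l. measure_pmf.expectation (pX_lam n \<alpha> l) (cost \<alpha>))"
  shows
    "(\<forall>l\<ge>0. \<forall>j\<in>{1..n+1}.
        mutual_info b (measure_pmf (pX_lam n \<alpha> l)) < \<infinity> \<and>
        enn2ereal (info_dens b (measure_pmf (pX_lam n \<alpha> l)) (xpt n j)) =
          enn2ereal (mutual_info b (measure_pmf (pX_lam n \<alpha> l)))
          + ereal (l * (cost \<alpha> (xpt n j) - E l)))
   \<and> (\<forall>l. E l = (\<Sum>j\<in>{1..n+1}. mw n \<alpha> l j * cost \<alpha> (xpt n j)))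
   \<and> (\<forall>l\<ge>0. (E has_real_derivative
                 (- measure_pmf.variance (pX_lam n \<alpha> l) (cost \<alpha>))) (at l within {0..})
            \<and> - measure_pmf.variance (pX_lam n \<alpha> l) (cost \<alpha>) < 0)
   \<and> E 0 = cbar_star n \<alpha>
   \<and> (E \<longlongrightarrow> 0) at_top
   \<and> (\<forall>cb. 0 < cb \<and> cb \<le> cbar_star n \<alpha> \<longrightarrow>
        (\<exists>!ls. ls \<ge> 0 \<and> E ls = cb) \<and>
        (\<forall>ls. ls \<ge> 0 \<and> E ls = cb \<longrightarrow>
           (\<forall>x\<in>set_pmf (pX_lam n \<alpha> ls).
              mutual_info b (measure_pmf (pX_lam n \<alpha> ls)) < \<infinity> \<and>
              enn2ereal (info_dens b (measure_pmf (pX_lam n \<alpha> ls)) x) =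
                enn2ereal (mutual_info b (measure_pmf (pX_lam n \<alpha> ls)))
                + ereal (ls * (cost \<alpha> x - cb)))))"
proof -
  have n1: "n \<ge> 1" by (rule n_ge1[OF hb hr])
  define c where "c = (\<lambda>j. cost \<alpha> (xpt n j))"
  have Ef: "\<And>l. E l = (\<Sum>j\<in>{1..n+1}. mw n \<alpha> l j * cost \<alpha> (xpt n j))"
    unfolding E_def by (rule expect_pX[OF n1])
  have Var: "\<And>l. measure_pmf.variance (pX_lam n \<alpha> l) (cost \<alpha>)
      = (\<Sum>j\<in>{1..n+1}. mw n \<alpha> l j * (c j - (\<Sum>k\<in>{1..n+1}. mw n \<alpha> l k * c k))^2)"
    using expect_pX[OF n1] Ef unfolding E_def c_def by simp
  have EF: "E = (\<lambda>l. (\<Sum>j\<in>{1..n+1}. exp (- l * c j) * c j) / zfun n \<alpha> l)"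
    using Ef E_formula unfolding c_def by auto
  have der: "\<And>l. (E has_real_derivative - measure_pmf.variance (pX_lam n \<alpha> l) (cost \<alpha>)) (at l)"
    unfolding EF Var c_def by (rule E_deriv)
  have vpos: "\<And>l. measure_pmf.variance (pX_lam n \<alpha> l) (cost \<alpha>) > 0"
    unfolding Var c_def by (rule var_pos[OF n1 h\<alpha>])
  have P1: "\<forall>l\<ge>0. \<forall>j\<in>{1..n+1}.
        mutual_info b (measure_pmf (pX_lam n \<alpha> l)) < \<infinity> \<and>
        enn2ereal (info_dens b (measure_pmf (pX_lam n \<alpha> l)) (xpt n j)) =
          enn2ereal (mutual_info b (measure_pmf (pX_lam n \<alpha> l)))
          + ereal (l * (cost \<alpha> (xpt n j) - E l))"
  proof (intro allI impI ballI conjI)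
    fix l :: real and j assume j: "j \<in> {1..n+1}"
    show "mutual_info b (measure_pmf (pX_lam n \<alpha> l)) < \<infinity>"
      unfolding mi_val[OF hb hr] by simp
    have nn: "(\<Sum>j\<in>{1..n+1}. mw n \<alpha> l j * (- ln (mw n \<alpha> l j))) \<ge> 0"
    proof (rule sum_nonneg)
      fix j assume j: "j \<in> {1..n+1}"
      show "0 \<le> mw n \<alpha> l j * (- ln (mw n \<alpha> l j))" by (rule mlnm_nn[OF j])
    qed
    have nj: "- ln (mw n \<alpha> l j) \<ge> 0" by (rule mlnm_nn[OF j])
    show "enn2ereal (info_dens b (measure_pmf (pX_lam n \<alpha> l)) (xpt n j)) =
          enn2ereal (mutual_info b (measure_pmf (pX_lam n \<alpha> l)))
          + ereal (l * (cost \<alpha> (xpt n j) - E l))"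
    proof -
      let ?S = "(\<Sum>j\<in>{1..n+1}. mw n \<alpha> l j * (- ln (mw n \<alpha> l j)))"
      let ?X = "l * (cost \<alpha> (xpt n j) - (\<Sum>k\<in>{1..n+1}. mw n \<alpha> l k * cost \<alpha> (xpt n k)))"
      have e1: "enn2ereal (ennreal (- ln (mw n \<alpha> l j))) = ereal (- ln (mw n \<alpha> l j))"
        by (rule enn2ereal_ennreal[OF nj])
      have e2: "- ln (mw n \<alpha> l j) = ?S + ?X" by (rule info_identity[OF j])
      have e3: "ereal (?S + ?X) = enn2ereal (ennreal ?S) + ereal ?X"
        by (simp only: enn2ereal_ennreal[OF nn] plus_ereal.simps)
      have "ereal (- ln (mw n \<alpha> l j)) = enn2ereal (ennreal ?S) + ereal ?X"
        by (subst e2) (rule e3)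
      from trans[OF e1 this] show ?thesis unfolding mi_val[OF hb hr] info_val[OF hb hr j] Ef .
    qed
  qed
  have z0: "zfun n \<alpha> 0 = real (n+1)" unfolding zfun_def by (simp del: sum.cl_ivl_Suc)
  have "E 0 = (\<Sum>j\<in>{1..n+1}. (1 / real (n+1)) * cost \<alpha> (xpt n j))"
    unfolding Ef mw_def z0 by simp
  also have "\<dots> = cbar_star n \<alpha>" unfolding cbar_star_def by (simp only: sum_distrib_left)
  finally have E0: "E 0 = cbar_star n \<alpha>" .
  have Elim: "(E \<longlongrightarrow> 0) at_top" unfolding Ef by (rule E_lim)
  have dec: "\<And>a b'. a < b' \<Longrightarrow> E b' < E a"
  proof -
    fix a b' :: real assume "a < b'"
    thus "E b' < E a"
    proof (rule DERIV_neg_imp_decreasing)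
      fix x show "\<exists>y. DERIV E x :> y \<and> y < 0" using der[of x] vpos[of x] by auto
    qed
  qed
  have cont: "continuous_on S E" for S
    by (rule DERIV_continuous_on, rule has_field_derivative_at_within, rule der)
  have P6: "\<exists>!ls. ls \<ge> 0 \<and> E ls = cb" if cb: "0 < cb \<and> cb \<le> cbar_star n \<alpha>" for cb
  proof -
    have "\<forall>\<^sub>F l in at_top. E l < cb" using order_tendstoD(2)[OF Elim] cb by blast
    then obtain L where L: "\<And>l. l \<ge> L \<Longrightarrow> E l < cb" by (auto simp: eventually_at_top_linorder)
    define L' where "L' = max L 0"
    have "E L' \<le> cb" "cb \<le> E 0" "0 \<le> L'" using L[of L'] cb E0 by (auto simp: L'_def)
    from IVT2'[OF this cont] obtain x where x: "0 \<le> x" "E x = cb" by auto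
    show "\<exists>!ls. ls \<ge> 0 \<and> E ls = cb"
    proof (rule ex1I[of _ x])
      show "0 \<le> x \<and> E x = cb" using x by simp
      fix y assume "0 \<le> y \<and> E y = cb"
      hence y: "0 \<le> y" "E y = cb" by auto
      show "y = x"
      proof (rule ccontr)
        assume "y \<noteq> x"
        hence "x < y \<or> y < x" by linarith
        thus False using dec[of x y] dec[of y x] x y by auto
      qed
    qed
  qed
  have P7: "\<forall>ls. ls \<ge> 0 \<and> E ls = cb \<longrightarrow>
           (\<forall>x\<in>set_pmf (pX_lam n \<alpha> ls).
              mutual_info b (measure_pmf (pX_lam n \<alpha> ls)) < \<infinity> \<and>
              enn2ereal (info_dens b (measure_pmf (pX_lam n \<alpha> ls)) x) =
                enn2ereal (mutual_info b (measure_pmf (pX_lam n \<alpha> ls)))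
                + ereal (ls * (cost \<alpha> x - cb)))" for cb
  proof (intro allI impI ballI)
    fix ls x assume h: "ls \<ge> 0 \<and> E ls = cb" and x: "x \<in> set_pmf (pX_lam n \<alpha> ls)"
    then obtain j where j: "j \<in> {1..n+1}" and xj: "x = xpt n j" unfolding set_pX[OF n1] by blast
    have "E ls = cb" using h by simp
    thus "mutual_info b (measure_pmf (pX_lam n \<alpha> ls)) < \<infinity> \<and>
              enn2ereal (info_dens b (measure_pmf (pX_lam n \<alpha> ls)) x) =
                enn2ereal (mutual_info b (measure_pmf (pX_lam n \<alpha> ls)))
                + ereal (ls * (cost \<alpha> x - cb))"
      using P1[THEN spec[of _ ls], THEN mp, THEN bspec[of _ _ j]] h j xj by simp
  qed
  show ?thesis
  proof (intro conjI)
    show "\<forall>l\<ge>0. \<forall>j\<in>{1..n+1}.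
        mutual_info b (measure_pmf (pX_lam n \<alpha> l)) < \<infinity> \<and>
        enn2ereal (info_dens b (measure_pmf (pX_lam n \<alpha> l)) (xpt n j)) =
          enn2ereal (mutual_info b (measure_pmf (pX_lam n \<alpha> l)))
          + ereal (l * (cost \<alpha> (xpt n j) - E l))" by (fact P1)
    show "\<forall>l. E l = (\<Sum>j\<in>{1..n+1}. mw n \<alpha> l j * cost \<alpha> (xpt n j))" using Ef by (rule allI)
    show "\<forall>l\<ge>0. (E has_real_derivative
                 (- measure_pmf.variance (pX_lam n \<alpha> l) (cost \<alpha>))) (at l within {0..})
            \<and> - measure_pmf.variance (pX_lam n \<alpha> l) (cost \<alpha>) < 0"
    proof (intro allI impI conjI)
      fix l :: real
      show "(E has_real_derivative (- measure_pmf.variance (pX_lam n \<alpha> l) (cost \<alpha>))) (at l within {0..})"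
        by (rule has_field_derivative_at_within[OF der])
      show "- measure_pmf.variance (pX_lam n \<alpha> l) (cost \<alpha>) < 0" using vpos[of l] by simp
    qed
    show "E 0 = cbar_star n \<alpha>" by (rule E0)
    show "(E \<longlongrightarrow> 0) at_top" by (rule Elim)
    show "\<forall>cb. 0 < cb \<and> cb \<le> cbar_star n \<alpha> \<longrightarrow>
        (\<exists>!ls. ls \<ge> 0 \<and> E ls = cb) \<and>
        (\<forall>ls. ls \<ge> 0 \<and> E ls = cb \<longrightarrow>
           (\<forall>x\<in>set_pmf (pX_lam n \<alpha> ls).
              mutual_info b (measure_pmf (pX_lam n \<alpha> ls)) < \<infinity> \<and>
              enn2ereal (info_dens b (measure_pmf (pX_lam n \<alpha> ls)) x) =
                enn2ereal (mutual_info b (measure_pmf (pX_lam n \<alpha> ls)))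
                + ereal (ls * (cost \<alpha> x - cb))))"
    proof (intro allI impI, rule conjI)
      fix cb assume h: "0 < cb \<and> cb \<le> cbar_star n \<alpha>"
      show "\<exists>!ls. ls \<ge> 0 \<and> E ls = cb" by (rule P6[OF h])
      show "\<forall>ls. ls \<ge> 0 \<and> E ls = cb \<longrightarrow>
           (\<forall>x\<in>set_pmf (pX_lam n \<alpha> ls).
              mutual_info b (measure_pmf (pX_lam n \<alpha> ls)) < \<infinity> \<and>
              enn2ereal (info_dens b (measure_pmf (pX_lam n \<alpha> ls)) x) =
                enn2ereal (mutual_info b (measure_pmf (pX_lam n \<alpha> ls)))
                + ereal (ls * (cost \<alpha> x - cb)))" by (rule P7)
    qed
  qed
qed

end
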